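(* Let $G$ be a line graph, let $D^*$ be a minimal dominating set of $G$, let $v$ be an isolated vertex of $G[D^*]$, and let $u$ be a neighbor of $v$. Write $\{x_1,\ldots,x_k\}=P_{D^*}(v)\setminus N[u]$ and $U=N[u]\cup\bigcup_{i=1}^k\big((N[x_i]\setminus N[v])\cup\{x_i\}\big)$. Then for any set $Z=\{z_1,\ldots,z_k\}$ with $z_i\in N(x_i)\setminus N[v]$ for each $i\in\{1,\ldots,k\}$, we have $U\subseteq N[Z\cup\{u\}]$.
   Context: Graphs are finite, simple, undirected; $N(x)$ is the open and $N[x]=N(x)\cup\{x\}$ the closed neighborhood, $N[S]=\bigcup_{x\in S}N[x]$. A line graph is a graph isomorphic to $L(H)$ for some graph $H$ ($L(H)$ has vertex set $E(H)$, adjacency = sharing an endpoint). A dominating set is $D\subseteq V(G)$ with $N[D]=V(G)$; minimal if no proper subset is dominating. For a dominating set $D$ and $x\in D$, $P_D(x)=N(x)\setminus N[D\setminus\{x\}]$ is the set of private neighbors of $x$. *)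

theory Defs
  imports Main
begin

definition simple_graph :: "'a set \<Rightarrow> ('a \<Rightarrow> 'a \<Rightarrow> bool) \<Rightarrow> bool" where
  "simple_graph V E \<longleftrightarrow> finite V \<and> (\<forall>x y. E x y \<longrightarrow> x \<in> V \<and> y \<in> V)
     \<and> (\<forall>x y. E x y \<longrightarrow> E y x) \<and> (\<forall>x. \<not> E x x)"

text \<open>f is an isomorphism from G = (V,E) onto the line graph L(H) of the simple graph H
  whose edges are the 2-element sets f ` V (vertices of H: their union).\<close>
definition line_graph_iso :: "'a set \<Rightarrow> ('a \<Rightarrow> 'a \<Rightarrow> bool) \<Rightarrow> ('a \<Rightarrow> 'b set) \<Rightarrow> bool" where
  "line_graph_iso V E f \<longleftrightarrow> inj_on f V \<and> (\<forall>x\<in>V. card (f x) = 2)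
     \<and> (\<forall>x\<in>V. \<forall>y\<in>V. E x y \<longleftrightarrow> (x \<noteq> y \<and> f x \<inter> f y \<noteq> {}))"

definition open_nbhd :: "'a set \<Rightarrow> ('a \<Rightarrow> 'a \<Rightarrow> bool) \<Rightarrow> 'a \<Rightarrow> 'a set" where
  "open_nbhd V E x = {y \<in> V. E x y}"

definition closed_nbhd :: "'a set \<Rightarrow> ('a \<Rightarrow> 'a \<Rightarrow> bool) \<Rightarrow> 'a \<Rightarrow> 'a set" where
  "closed_nbhd V E x = insert x (open_nbhd V E x)"

definition closed_nbhd_set :: "'a set \<Rightarrow> ('a \<Rightarrow> 'a \<Rightarrow> bool) \<Rightarrow> 'a set \<Rightarrow> 'a set" where
  "closed_nbhd_set V E S = (\<Union>x\<in>S. closed_nbhd V E x)"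

definition dominating :: "'a set \<Rightarrow> ('a \<Rightarrow> 'a \<Rightarrow> bool) \<Rightarrow> 'a set \<Rightarrow> bool" where
  "dominating V E D \<longleftrightarrow> D \<subseteq> V \<and> closed_nbhd_set V E D = V"

definition minimal_dominating :: "'a set \<Rightarrow> ('a \<Rightarrow> 'a \<Rightarrow> bool) \<Rightarrow> 'a set \<Rightarrow> bool" where
  "minimal_dominating V E D \<longleftrightarrow> dominating V E D \<and> (\<forall>D'. D' \<subset> D \<longrightarrow> \<not> dominating V E D')"

definition private_nbrs :: "'a set \<Rightarrow> ('a \<Rightarrow> 'a \<Rightarrow> bool) \<Rightarrow> 'a set \<Rightarrow> 'a \<Rightarrow> 'a set" where
  "private_nbrs V E D x = open_nbhd V E x - closed_nbhd_set V E (D - {x})"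

end

theory Submission
  imports Defs
begin

lemma key:
  assumes "card X = 2" "X \<inter> A \<noteq> {}" "Y \<inter> A = {}" "Y \<inter> X \<noteq> {}" "W \<inter> A = {}" "W \<inter> X \<noteq> {}"
  shows "Y \<inter> W \<noteq> {}"
proof -
  obtain p q where X: "X = {p,q}" "p \<noteq> q" using assms(1) by (meson card_2_iff)
  show ?thesis using assms(2-6) unfolding X by auto
qed

theorem lemma5:
  fixes V :: "'a set" and E :: "'a \<Rightarrow> 'a \<Rightarrow> bool" and f :: "'a \<Rightarrow> 'b set"
    and D :: "'a set" and v u :: 'a and z :: "'a \<Rightarrow> 'a"
  assumes "simple_graph V E"
    and "line_graph_iso V E f"
    and "minimal_dominating V E D"
    and "v \<in> D" and "\<forall>w\<in>D. \<not> E v w"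
    and "E v u"
    and "\<forall>x \<in> private_nbrs V E D v - closed_nbhd V E u.
           z x \<in> open_nbhd V E x - closed_nbhd V E v"
  shows "closed_nbhd V E u \<union>
           (\<Union>x \<in> private_nbrs V E D v - closed_nbhd V E u.
              (closed_nbhd V E x - closed_nbhd V E v) \<union> {x})
         \<subseteq> closed_nbhd_set V E (z ` (private_nbrs V E D v - closed_nbhd V E u) \<union> {u})"
proof
  fix y assume y: "y \<in> closed_nbhd V E u \<union>
           (\<Union>x \<in> private_nbrs V E D v - closed_nbhd V E u.
              (closed_nbhd V E x - closed_nbhd V E v) \<union> {x})"
  have vV: "v \<in> V" using assms(1,6) unfolding simple_graph_def by blast
  have L: "\<And>x y. x \<in> V \<Longrightarrow> y \<in> V \<Longrightarrow> E x y \<longleftrightarrow> (x \<noteq> y \<and> f x \<inter> f y \<noteq> {})"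
    and C: "\<And>x. x \<in> V \<Longrightarrow> card (f x) = 2"
    using assms(2) unfolding line_graph_iso_def by auto
  show "y \<in> closed_nbhd_set V E (z ` (private_nbrs V E D v - closed_nbhd V E u) \<union> {u})"
  proof (cases "y \<in> closed_nbhd V E u")
    case True then show ?thesis unfolding closed_nbhd_set_def by blast
  next
    case False
    then obtain x where x: "x \<in> private_nbrs V E D v - closed_nbhd V E u"
      and yx: "y \<in> (closed_nbhd V E x - closed_nbhd V E v) \<union> {x}" using y by blast
    have zx: "z x \<in> open_nbhd V E x - closed_nbhd V E v" using x assms(7) by blast
    have xV: "x \<in> V" and Evx: "E v x" using x unfolding private_nbrs_def open_nbhd_def by auto
    have zV: "z x \<in> V" and Exz: "E x (z x)" and nvz: "z x \<noteq> v" "\<not> E v (z x)"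
      using zx unfolding open_nbhd_def closed_nbhd_def by auto
    have zn: "y \<in> closed_nbhd V E (z x)"
    proof (cases "y = x")
      case True then show ?thesis using Exz assms(1) xV unfolding closed_nbhd_def open_nbhd_def simple_graph_def by auto
    next
      case False
      then have yV: "y \<in> V" and Exy: "E x y" and nvy: "y \<noteq> v" "\<not> E v y"
        using yx unfolding open_nbhd_def closed_nbhd_def by auto
      show ?thesis
      proof (cases "y = z x")
        case True then show ?thesis unfolding closed_nbhd_def by auto
      next
        case ne: False
        have a: "f x \<inter> f v \<noteq> {}" using L[OF vV xV] Evx by blast
        have b: "f y \<inter> f v = {}" using L[OF vV yV] nvy by blast
        have c: "f y \<inter> f x \<noteq> {}" using L[OF xV yV] Exy by blast
        have d: "f (z x) \<inter> f v = {}" using L[OF vV zV] nvz by blast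
        have e: "f (z x) \<inter> f x \<noteq> {}" using L[OF xV zV] Exz by blast
        have "f (z x) \<inter> f y \<noteq> {}" using key[OF C[OF xV] a d e b c] .
        then have "E (z x) y" using L[OF zV yV] ne by blast
        then show ?thesis using yV unfolding closed_nbhd_def open_nbhd_def by auto
      qed
    qed
    then show ?thesis using x unfolding closed_nbhd_set_def by blast
  qed
qed

end
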